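(* In the setting of the context, fix distinct integers $r,s$ with $0\le r,s\le d$. The following are equivalent: (i) in $\Delta$, vertex $r$ is adjacent to vertex $s$ and to no other vertex; (ii) there exists $\kappa\in\mathbb F$ such that $(A^*-\kappa I)E_rV=E_sV$. Moreover, if (i) and (ii) hold then $\kappa=a^*_r$.
   Context: Let $\mathbb F$ be a field, $d\ge1$ an integer, $V$ a vector space over $\mathbb F$ of dimension $d+1$, $\mathcal A=\mathrm{End}(V)$ with identity $I$. Let $E^*_0,\dots,E^*_d\in\mathcal A$ satisfy $E^*_iE^*_j=\delta_{i,j}E^*_i$ and $\mathrm{rank}(E^*_i)=1$ for $0\le i,j\le d$. Let $A\in\mathcal A$ satisfy $E^*_iAE^*_j=0$ if $|i-j|>1$ and $E^*_iAE^*_j\neq0$ if $|i-j|=1$. Assume $A$ has $d+1$ mutually distinct eigenvalues $\theta_0,\dots,\theta_d$ in $\mathbb F$, and let $E_i=\prod_{j\ne i}\frac{A-\theta_jI}{\theta_i-\theta_j}$ be the primitive idempotent of $A$ for $\theta_i$. Let $\theta^*_0,\dots,\theta^*_d\in\mathbb F$ and $A^*=\sum_{i=0}^d\theta^*_iE^*_i$. Define $a^*_i=\mathrm{tr}(E_iA^* )$. Let $\Delta$ be the graph on vertex set $\{0,\dots,d\}$ in which $i,j$ are adjacent iff $i\ne j$ and $E_iA^*E_j\ne0$. *)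

theory Defs
  imports "Jordan_Normal_Form.Char_Poly" "Jordan_Normal_Form.DL_Rank"
begin

text \<open>Matrices over a field 'a of size (d+1) x (d+1) represent End(V), dim V = d+1.\<close>

definition mat_trace :: "'a::comm_ring_1 mat \<Rightarrow> 'a" where
  "mat_trace M = (\<Sum>i<dim_row M. M $$ (i, i))"

definition range_mat :: "'a::comm_ring_1 mat \<Rightarrow> 'a vec set" where
  "range_mat M = (\<lambda>x. M *\<^sub>v x) ` carrier_vec (dim_col M)"

definition mat_image :: "'a::comm_ring_1 mat \<Rightarrow> 'a vec set \<Rightarrow> 'a vec set" where
  "mat_image B W = (\<lambda>w. B *\<^sub>v w) ` W"

definition mat_sum_upto :: "nat \<Rightarrow> nat \<Rightarrow> (nat \<Rightarrow> 'a::comm_ring_1 mat) \<Rightarrow> 'a mat" where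
  "mat_sum_upto n d f = foldr (\<lambda>i M. f i + M) [0..<Suc d] (0\<^sub>m n n)"

text \<open>Primitive idempotent E_i = prod_{j \<noteq> i} (A - th_j I)/(th_i - th_j).
  The factors commute, so the order of the product is immaterial.\<close>
definition prim_idem :: "nat \<Rightarrow> 'a::field mat \<Rightarrow> (nat \<Rightarrow> 'a) \<Rightarrow> nat \<Rightarrow> 'a mat" where
  "prim_idem d A th i = foldr (\<lambda>j M. if j = i then M
       else (inverse (th i - th j) \<cdot>\<^sub>m (A - th j \<cdot>\<^sub>m 1\<^sub>m (Suc d))) * M)
     [0..<Suc d] (1\<^sub>m (Suc d))"

end

theory Submission
  imports Defs
begin
lemma smult_mat_mult_vec: "B \<in> carrier_mat n m \<Longrightarrow> v \<in> carrier_vec m \<Longrightarrow> (c \<cdot>\<^sub>m B) *\<^sub>v v = c \<cdot>\<^sub>v (B *\<^sub>v (v :: 'a::comm_ring_1 vec))"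
  by (intro eq_vecI) (auto simp: scalar_prod_def sum_distrib_left ac_simps)
lemma smult_one_mult_vec: "v \<in> carrier_vec n \<Longrightarrow> (c \<cdot>\<^sub>m 1\<^sub>m n) *\<^sub>v v = c \<cdot>\<^sub>v (v :: 'a::comm_ring_1 vec)"
  using smult_mat_mult_vec[of "1\<^sub>m n" n n v c] by simp


lemma prim_fold_eig:
  fixes A :: "'a::field mat"
  assumes A: "A \<in> carrier_mat n n" and v: "v \<in> carrier_vec n" and Av: "A *\<^sub>v v = th k \<cdot>\<^sub>v v"
    and dist: "\<And>j. j \<in> set xs \<Longrightarrow> j \<noteq> i \<Longrightarrow> th j \<noteq> th i"
  shows "foldr (\<lambda>j M. if j = i then M else (inverse (th i - th j) \<cdot>\<^sub>m (A - th j \<cdot>\<^sub>m 1\<^sub>m n)) * M) xs (1\<^sub>m n) \<in> carrier_mat n n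
    \<and> (\<exists>c. foldr (\<lambda>j M. if j = i then M else (inverse (th i - th j) \<cdot>\<^sub>m (A - th j \<cdot>\<^sub>m 1\<^sub>m n)) * M) xs (1\<^sub>m n) *\<^sub>v v = c \<cdot>\<^sub>v v
      \<and> (k = i \<longrightarrow> c = 1) \<and> (k \<noteq> i \<and> k \<in> set xs \<longrightarrow> c = 0))"
  using dist
proof (induction xs)
  case Nil
  then show ?case using v by (intro conjI exI[of _ 1]) auto
next
  case (Cons j xs)
  let ?M = "foldr (\<lambda>j M. if j = i then M else (inverse (th i - th j) \<cdot>\<^sub>m (A - th j \<cdot>\<^sub>m 1\<^sub>m n)) * M) xs (1\<^sub>m n)"
  from Cons obtain c where M: "?M \<in> carrier_mat n n" and Mv: "?M *\<^sub>v v = c \<cdot>\<^sub>v v"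
    and c1: "k = i \<longrightarrow> c = 1" and c0: "k \<noteq> i \<and> k \<in> set xs \<longrightarrow> c = 0" by auto
  show ?case
  proof (cases "j = i")
    case True
    then show ?thesis using M Mv c1 c0 by auto
  next
    case False
    let ?F = "inverse (th i - th j) \<cdot>\<^sub>m (A - th j \<cdot>\<^sub>m 1\<^sub>m n)"
    have F: "?F \<in> carrier_mat n n" using A by auto
    have "(?F * ?M) *\<^sub>v v = ?F *\<^sub>v (?M *\<^sub>v v)" using F M v by auto
    also have "\<dots> = ?F *\<^sub>v (c \<cdot>\<^sub>v v)" using Mv by simp
    also have "\<dots> = (c * inverse (th i - th j) * (th k - th j)) \<cdot>\<^sub>v v"
    proof -
      have "(A - th j \<cdot>\<^sub>m 1\<^sub>m n) *\<^sub>v v = A *\<^sub>v v - (th j \<cdot>\<^sub>m 1\<^sub>m n) *\<^sub>v v"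
        using A v by (intro minus_mult_distrib_mat_vec) auto
      also have "\<dots> = (th k - th j) \<cdot>\<^sub>v v" unfolding Av smult_one_mult_vec[OF v]
        using v by (intro eq_vecI) (simp_all add: left_diff_distrib)
      finally have 1: "(A - th j \<cdot>\<^sub>m 1\<^sub>m n) *\<^sub>v v = (th k - th j) \<cdot>\<^sub>v v" .
      have "?F *\<^sub>v (c \<cdot>\<^sub>v v) = inverse (th i - th j) \<cdot>\<^sub>v ((A - th j \<cdot>\<^sub>m 1\<^sub>m n) *\<^sub>v (c \<cdot>\<^sub>v v))"
        using A v by (intro smult_mat_mult_vec) auto
      also have "\<dots> = inverse (th i - th j) \<cdot>\<^sub>v (c \<cdot>\<^sub>v ((th k - th j) \<cdot>\<^sub>v v))"
        using A v 1 by (subst mult_mat_vec[of _ n n]) auto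
      finally show ?thesis using v by (intro eq_vecI) simp_all
    qed
    finally have eq: "(?F * ?M) *\<^sub>v v = (c * inverse (th i - th j) * (th k - th j)) \<cdot>\<^sub>v v" .
    have "th j \<noteq> th i" using Cons.prems False by simp
    then have ne: "th i - th j \<noteq> 0" by simp
    show ?thesis
    proof -
      have fe: "foldr (\<lambda>j M. if j = i then M else (inverse (th i - th j) \<cdot>\<^sub>m (A - th j \<cdot>\<^sub>m 1\<^sub>m n)) * M) (j # xs) (1\<^sub>m n) = ?F * ?M"
        using False by simp
      have cc: "(k = i \<longrightarrow> c * inverse (th i - th j) * (th k - th j) = 1) \<and>
          (k \<noteq> i \<and> k \<in> set (j # xs) \<longrightarrow> c * inverse (th i - th j) * (th k - th j) = 0)"
      proof (intro conjI impI)
        assume "k = i" then show "c * inverse (th i - th j) * (th k - th j) = 1" using c1 ne by simp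
      next
        assume "k \<noteq> i \<and> k \<in> set (j # xs)"
        then consider "k = j" | "k \<in> set xs" by auto
        then show "c * inverse (th i - th j) * (th k - th j) = 0"
          by cases (use c0 \<open>k \<noteq> i \<and> k \<in> set (j # xs)\<close> in auto)
      qed
      show ?thesis unfolding fe using eq cc F M by (intro conjI exI[of _ "c * inverse (th i - th j) * (th k - th j)"] mult_carrier_mat) auto
    qed
  qed
qed


definition dmat :: "nat \<Rightarrow> nat \<Rightarrow> 'a::comm_ring_1 mat" where
  "dmat n i = mat n n (\<lambda>(a,b). if a = i \<and> b = i then 1 else 0)"

definition diagm :: "nat \<Rightarrow> (nat \<Rightarrow> 'a::comm_ring_1) \<Rightarrow> 'a mat" where
  "diagm n c = mat n n (\<lambda>(a,b). if a = b then c a else 0)"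

lemma ifm1: "(if P then a else 0) * (y::'a::semiring_0) = (if P then a * y else 0)" by simp
lemma ifm2: "(y::'a::semiring_0) * (if P then a else 0) = (if P then y * a else 0)" by simp

lemma dmat_dims[simp]: "dim_row (dmat n i) = n" "dim_col (dmat n i) = n" by (simp_all add: dmat_def)
lemma diagm_dims[simp]: "dim_row (diagm n c) = n" "dim_col (diagm n c) = n" by (simp_all add: diagm_def)

lemma dmat_carrier[simp]: "dmat n i \<in> carrier_mat n n" by (simp add: dmat_def)
lemma diagm_carrier[simp]: "diagm n c \<in> carrier_mat n n" by (simp add: diagm_def)

lemma mult_dmat_index:
  assumes X: "X \<in> carrier_mat m n" and a: "a < m" and b: "b < n" and i: "i < n"
  shows "(X * dmat n i) $$ (a,b) = (if b = i then X $$ (a,i) else 0)"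
  using X a b i by (auto simp: dmat_def scalar_prod_def ifm1 ifm2)

lemma dmat_mult_index:
  assumes X: "X \<in> carrier_mat n m" and a: "a < n" and b: "b < m" and i: "i < n"
  shows "(dmat n i * X) $$ (a,b) = (if a = i then X $$ (i,b) else 0)"
  using X a b i by (auto simp: dmat_def scalar_prod_def ifm1 ifm2)

lemma mult_diagm_index:
  assumes X: "X \<in> carrier_mat m n" and a: "a < m" and b: "b < n"
  shows "(X * diagm n c) $$ (a,b) = X $$ (a,b) * c b"
  using X a b by (auto simp: diagm_def scalar_prod_def ifm1 ifm2)

lemma diagm_mult_index:
  assumes X: "X \<in> carrier_mat n m" and a: "a < n" and b: "b < m"
  shows "(diagm n c * X) $$ (a,b) = c a * X $$ (a,b)"
  using X a b by (auto simp: diagm_def scalar_prod_def ifm1 ifm2)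


lemma inv_exists:
  assumes P: "(P :: 'a::field mat) \<in> carrier_mat n n" and d: "det P \<noteq> 0"
  shows "\<exists>Q. Q \<in> carrier_mat n n \<and> P * Q = 1\<^sub>m n \<and> Q * P = 1\<^sub>m n"
  using det_non_zero_imp_unit[OF P d, of "()"] unfolding Units_def by (auto simp: ring_mat_simps)

lemma mat_unit_col:
  assumes X: "(X :: 'a::comm_ring_1 mat) \<in> carrier_mat n n" and a: "a < n" and b: "b < n"
  shows "(X *\<^sub>v unit_vec n b) $ a = X $$ (a,b)"
  using X a b by simp

lemma nonzero_mat_vec:
  assumes X: "(X :: 'a::comm_ring_1 mat) \<in> carrier_mat n n" and nz: "X \<noteq> 0\<^sub>m n n"
  shows "\<exists>x \<in> carrier_vec n. X *\<^sub>v x \<noteq> 0\<^sub>v n"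
proof (rule ccontr)
  assume "\<not> ?thesis"
  then have z: "\<And>b. b < n \<Longrightarrow> X *\<^sub>v unit_vec n b = 0\<^sub>v n" by auto
  have "X = 0\<^sub>m n n"
  proof (rule eq_matI)
    fix a b assume a: "a < dim_row (0\<^sub>m n n :: 'a mat)" and b: "b < dim_col (0\<^sub>m n n :: 'a mat)"
    then have "X $$ (a,b) = (X *\<^sub>v unit_vec n b) $ a" using X by simp
    also have "\<dots> = 0" using z[of b] a b by simp
    finally show "X $$ (a,b) = 0\<^sub>m n n $$ (a,b)" using a b by simp
  qed (use X in auto)
  then show False using nz by simp
qed

lemma basis_mat:
  fixes v :: "nat \<Rightarrow> 'a::field vec" and F :: "nat \<Rightarrow> 'a mat"
  assumes vc: "\<And>k. k < n \<Longrightarrow> v k \<in> carrier_vec n" and vnz: "\<And>k. k < n \<Longrightarrow> v k \<noteq> 0\<^sub>v n"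
    and Fc: "\<And>i. i < n \<Longrightarrow> F i \<in> carrier_mat n n"
    and Fv: "\<And>i k. i < n \<Longrightarrow> k < n \<Longrightarrow> F i *\<^sub>v v k = (if i = k then v k else 0\<^sub>v n)"
  shows "mat n n (\<lambda>(a,b). v b $ a) \<in> carrier_mat n n"
    and "\<And>i. i < n \<Longrightarrow> F i * mat n n (\<lambda>(a,b). v b $ a) = mat n n (\<lambda>(a,b). v b $ a) * dmat n i"
    and "det (mat n n (\<lambda>(a,b). v b $ a)) \<noteq> 0"
proof -
  define P where "P = mat n n (\<lambda>(a,b). v b $ a)"
  show Pc: "mat n n (\<lambda>(a,b). v b $ a) \<in> carrier_mat n n" by simp
  have colP: "col P b = v b" if "b < n" for b
    unfolding P_def using vc[OF that] that by (intro eq_vecI) auto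
  have FPe: "(F i * P) $$ (a,b) = (if b = i then v i $ a else 0)" if i: "i < n" and a: "a < n" and b: "b < n" for i a b
  proof -
    have "(F i * P) $$ (a,b) = row (F i) a \<bullet> col P b" using Fc[OF i] a b unfolding P_def by simp
    also have "\<dots> = (F i *\<^sub>v v b) $ a" using Fc[OF i] a b colP[OF b] by simp
    also have "\<dots> = (if b = i then v i $ a else 0)" using Fv[OF i b] a by auto
    finally show ?thesis .
  qed
  show FP: "F i * mat n n (\<lambda>(a,b). v b $ a) = mat n n (\<lambda>(a,b). v b $ a) * dmat n i" if i: "i < n" for i
    unfolding P_def[symmetric]
  proof (rule eq_matI)
    fix a b assume a: "a < dim_row (P * dmat n i)" and b: "b < dim_col (P * dmat n i)"
    then have a': "a < n" and b': "b < n" unfolding P_def by (auto simp: dmat_def)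
    show "(F i * P) $$ (a,b) = (P * dmat n i) $$ (a,b)"
      unfolding FPe[OF i a' b'] using mult_dmat_index[of P n n a b i] a' b' i unfolding P_def by auto
  qed (use Fc[OF i] in \<open>auto simp: P_def dmat_def\<close>)
  show "det (mat n n (\<lambda>(a,b). v b $ a)) \<noteq> 0"
    unfolding P_def[symmetric]
  proof
    assume "det P = 0"
    then obtain c where c: "c \<in> carrier_vec n" "c \<noteq> 0\<^sub>v n" "P *\<^sub>v c = 0\<^sub>v n"
      using det_0_iff_vec_prod_zero_field[of P n] Pc unfolding P_def by auto
    have "c $ i = 0" if i: "i < n" for i
    proof -
      have PcP: "P \<in> carrier_mat n n" unfolding P_def by simp
      have "(F i * P) *\<^sub>v c = F i *\<^sub>v (P *\<^sub>v c)" by (rule assoc_mult_mat_vec[OF Fc[OF i] PcP c(1)])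
      also have "\<dots> = 0\<^sub>v n" using c(3) Fc[OF i] by (auto intro!: eq_vecI)
      finally have z: "(F i * P) *\<^sub>v c = 0\<^sub>v n" .
      have "(F i * P) *\<^sub>v c = c $ i \<cdot>\<^sub>v v i"
      proof (rule eq_vecI)
        fix a assume "a < dim_vec (c $ i \<cdot>\<^sub>v v i)"
        then have a: "a < n" using vc[OF i] by simp
        have "((F i * P) *\<^sub>v c) $ a = (\<Sum>b<n. (F i * P) $$ (a,b) * c $ b)"
          using Fc[OF i] a c(1) unfolding P_def by (simp add: scalar_prod_def lessThan_atLeast0)
        also have "\<dots> = (\<Sum>b<n. (if b = i then v i $ a * c $ b else 0))"
          by (rule sum.cong) (use FPe[OF i a] in auto)
        also have "\<dots> = v i $ a * c $ i" using i by simp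
        finally show "((F i * P) *\<^sub>v c) $ a = (c $ i \<cdot>\<^sub>v v i) $ a" using a vc[OF i] by simp
      qed (use Fc[OF i] vc[OF i] in \<open>auto simp: P_def\<close>)
      with z have "c $ i \<cdot>\<^sub>v v i = 0\<^sub>v n" by simp
      moreover have "v i \<noteq> 0\<^sub>v n" by (rule vnz[OF i])
      then obtain a where a: "a < n" "v i $ a \<noteq> 0" using vc[OF i] by (metis eq_vecI carrier_vecD index_zero_vec(1) index_zero_vec(2))
      ultimately have "c $ i * v i $ a = 0" using vc[OF i]
        by (metis index_smult_vec(1) index_zero_vec(1) carrier_vecD)
      then show ?thesis using a by simp
    qed
    then have "c = 0\<^sub>v n" using c(1) by (intro eq_vecI) auto
    then show False using c(2) by simp
  qed
qed

lemma mat_trace_comm: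
  assumes X: "(X :: 'a::comm_ring_1 mat) \<in> carrier_mat n m" and Y: "Y \<in> carrier_mat m n"
  shows "mat_trace (X * Y) = mat_trace (Y * X)"
proof -
  have "mat_trace (X * Y) = (\<Sum>i<n. \<Sum>k<m. X $$ (i,k) * Y $$ (k,i))"
    unfolding mat_trace_def using X Y by (auto simp: scalar_prod_def lessThan_atLeast0 intro!: sum.cong)
  also have "\<dots> = (\<Sum>k<m. \<Sum>i<n. Y $$ (k,i) * X $$ (i,k))"
    by (subst sum.swap) (simp add: mult.commute)
  also have "\<dots> = mat_trace (Y * X)"
    unfolding mat_trace_def using X Y by (auto simp: scalar_prod_def lessThan_atLeast0 intro!: sum.cong)
  finally show ?thesis .
qed

lemma dmat_mult_eq:
  assumes X: "(X :: 'a::comm_ring_1 mat) \<in> carrier_mat n m" and r: "r < n"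
  shows "dmat n r * X = mat n m (\<lambda>(k,b). if k = r then X $$ (r,b) else 0)"
  by (rule eq_matI) (use X r dmat_mult_index[OF X _ _ r] in auto)

lemma mat_trace_dmat:
  assumes X: "(X :: 'a::comm_ring_1 mat) \<in> carrier_mat n n" and r: "r < n"
  shows "mat_trace (dmat n r * X) = X $$ (r,r)"
proof -
  have "mat_trace (dmat n r * X) = (\<Sum>a<n. if a = r then X $$ (r,a) else 0)"
    unfolding mat_trace_def dmat_mult_eq[OF X r] by (auto intro!: sum.cong)
  also have "\<dots> = X $$ (r,r)" using r by simp
  finally show ?thesis .
qed

lemma dmat_sandwich:
  assumes X: "(X :: 'a::comm_ring_1 mat) \<in> carrier_mat n n" and i: "i < n" and j: "j < n"
    and a: "a < n" and b: "b < n"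
  shows "(dmat n i * X * dmat n j) $$ (a,b) = (if a = i \<and> b = j then X $$ (i,j) else 0)"
proof -
  have c: "dmat n i * X \<in> carrier_mat n n" by (rule mult_carrier_mat[OF dmat_carrier X])
  show ?thesis using mult_dmat_index[OF c a b j] dmat_mult_index[OF X a j i] by auto
qed

lemma dmat_sandwich_zero:
  assumes X: "(X :: 'a::comm_ring_1 mat) \<in> carrier_mat n n" and i: "i < n" and j: "j < n"
  shows "dmat n i * X * dmat n j = 0\<^sub>m n n \<longleftrightarrow> X $$ (i,j) = 0"
proof
  assume "dmat n i * X * dmat n j = 0\<^sub>m n n"
  then have "(dmat n i * X * dmat n j) $$ (i,j) = 0" using i j by simp
  then show "X $$ (i,j) = 0" using dmat_sandwich[OF X i j i j] by simp
next
  assume z: "X $$ (i,j) = 0"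
  show "dmat n i * X * dmat n j = 0\<^sub>m n n"
    by (rule eq_matI) (use dmat_sandwich[OF X i j] z X in \<open>auto simp: dmat_def\<close>)
qed

lemma dmat_conj_index:
  assumes X: "(X :: 'a::comm_ring_1 mat) \<in> carrier_mat n n" and Y: "Y \<in> carrier_mat n n"
    and r: "r < n" and a: "a < n" and b: "b < n"
  shows "(X * dmat n r * Y) $$ (a,b) = X $$ (a,r) * Y $$ (r,b)"
proof -
  have "X * dmat n r * Y = X * (dmat n r * Y)" by (rule assoc_mult_mat[OF X dmat_carrier Y])
  also have "\<dots> $$ (a,b) = (\<Sum>k<n. X $$ (a,k) * (if k = r then Y $$ (r,b) else 0))"
    unfolding dmat_mult_eq[OF Y r] using X Y a b r by (auto simp: scalar_prod_def lessThan_atLeast0 intro!: sum.cong)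
  also have "\<dots> = X $$ (a,r) * Y $$ (r,b)" using r by (simp add: ifm2)
  finally show ?thesis .
qed

lemma conj_zero:
  assumes U: "(U :: 'a::comm_ring_1 mat) \<in> carrier_mat n n" and W: "W \<in> carrier_mat n n"
    and WU: "W * U = 1\<^sub>m n" and X: "X \<in> carrier_mat n n"
  shows "U * X * W = 0\<^sub>m n n \<longleftrightarrow> X = 0\<^sub>m n n"
proof
  assume z: "U * X * W = 0\<^sub>m n n"
  have "X = (W * U) * X * (W * U)" using WU X by simp
  also have "\<dots> = W * (U * X * W) * U" using U W X by (simp add: assoc_mult_mat[of _ n n _ n _ n])
  also have "\<dots> = 0\<^sub>m n n" using z U W by simp
  finally show "X = 0\<^sub>m n n" .
qed (use U W in simp)

lemma foldr_sum_conj: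
  assumes U: "(U :: 'a::comm_ring_1 mat) \<in> carrier_mat n n" and W: "W \<in> carrier_mat n n"
    and fg: "\<And>i. i \<in> set xs \<Longrightarrow> f i = U * g i * W" and gc: "\<And>i. i \<in> set xs \<Longrightarrow> g i \<in> carrier_mat n n"
  shows "foldr (\<lambda>i M. f i + M) xs (0\<^sub>m n n) = U * foldr (\<lambda>i M. g i + M) xs (0\<^sub>m n n) * W
     \<and> foldr (\<lambda>i M. g i + M) xs (0\<^sub>m n n) \<in> carrier_mat n n"
  using fg gc
proof (induction xs)
  case Nil
  then show ?case using U W by simp
next
  case (Cons j xs)
  let ?G = "foldr (\<lambda>i M. g i + M) xs (0\<^sub>m n n)"
  from Cons have IH: "foldr (\<lambda>i M. f i + M) xs (0\<^sub>m n n) = U * ?G * W" "?G \<in> carrier_mat n n" by auto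
  have gj: "g j \<in> carrier_mat n n" and fj: "f j = U * g j * W" using Cons.prems by auto
  have "U * (g j + ?G) * W = U * g j * W + U * ?G * W"
    using U W gj IH(2) by (simp add: mult_add_distrib_mat[of _ n n] add_mult_distrib_mat[of _ n n])
  then show ?case using IH fj gj by simp
qed

lemma foldr_sum_diag:
  assumes "distinct xs" "set xs \<subseteq> {..<n}"
  shows "foldr (\<lambda>i M. c i \<cdot>\<^sub>m dmat n i + M) xs (0\<^sub>m n n) =
     mat n n (\<lambda>(a,b). if a = b \<and> a \<in> set xs then c a else (0::'a::comm_ring_1))"
  using assms
proof (induction xs)
  case Nil
  then show ?case by (auto intro!: eq_matI)
next
  case (Cons j xs)
  then show ?case by (auto intro!: eq_matI simp: dmat_def)
qed

lemma span_eq: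
  fixes v w :: "'a::field vec"
  assumes v: "v \<in> carrier_vec n" and w: "w \<in> carrier_vec n" and vnz: "v \<noteq> 0\<^sub>v n"
  shows "{a \<cdot>\<^sub>v w | a. True} = {a \<cdot>\<^sub>v v | a. True} \<longleftrightarrow> (\<exists>\<mu>. \<mu> \<noteq> 0 \<and> w = \<mu> \<cdot>\<^sub>v v)"
proof
  assume eq: "{a \<cdot>\<^sub>v w | a. True} = {a \<cdot>\<^sub>v v | a. True}"
  have "v \<in> {a \<cdot>\<^sub>v v | a. True}" by (auto intro!: exI[of _ 1])
  then obtain a where a: "v = a \<cdot>\<^sub>v w" using eq by auto
  have an: "a \<noteq> 0"
  proof
    assume "a = 0" then have "v = 0\<^sub>v n" using a w by (auto intro!: eq_vecI)
    then show False using vnz by simp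
  qed
  have "w = inverse a \<cdot>\<^sub>v v" unfolding a using an w by (auto intro!: eq_vecI)
  then show "\<exists>\<mu>. \<mu> \<noteq> 0 \<and> w = \<mu> \<cdot>\<^sub>v v" using an by (intro exI[of _ "inverse a"]) auto
next
  assume "\<exists>\<mu>. \<mu> \<noteq> 0 \<and> w = \<mu> \<cdot>\<^sub>v v"
  then obtain \<mu> where mu: "\<mu> \<noteq> 0" "w = \<mu> \<cdot>\<^sub>v v" by auto
  show "{a \<cdot>\<^sub>v w | a. True} = {a \<cdot>\<^sub>v v | a. True}"
  proof (intro equalityI subsetI)
    fix x assume "x \<in> {a \<cdot>\<^sub>v w | a. True}"
    then obtain a where "x = a \<cdot>\<^sub>v w" by auto
    then have "x = (a * \<mu>) \<cdot>\<^sub>v v" using mu v by (auto intro!: eq_vecI)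
    then show "x \<in> {a \<cdot>\<^sub>v v | a. True}" by auto
  next
    fix x assume "x \<in> {a \<cdot>\<^sub>v v | a. True}"
    then obtain a where "x = a \<cdot>\<^sub>v v" by auto
    then have "x = (a * inverse \<mu>) \<cdot>\<^sub>v w" using mu v by (auto intro!: eq_vecI)
    then show "x \<in> {a \<cdot>\<^sub>v w | a. True}" by auto
  qed
qed

lemma cancel_l:
  assumes "W * U = 1\<^sub>m n" "W \<in> carrier_mat n n" "U \<in> carrier_mat n n" "(X :: 'a::comm_ring_1 mat) \<in> carrier_mat n m"
  shows "W * (U * X) = X"
proof -
  have "W * (U * X) = (W * U) * X" by (rule assoc_mult_mat[OF assms(2-4), symmetric])
  also have "\<dots> = 1\<^sub>m n * X" by (simp only: assms(1))
  also have "\<dots> = X" using assms(4) by simp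
  finally show ?thesis .
qed

lemma zero_mult_vec': "x \<in> carrier_vec m \<Longrightarrow> 0\<^sub>m n m *\<^sub>v x = (0\<^sub>v n :: 'a::comm_ring_1 vec)"
  by (auto intro!: eq_vecI)

lemma diagm_det:
  assumes "\<And>a. a < n \<Longrightarrow> c a \<noteq> (0::'a::field)"
  shows "det (diagm n c) \<noteq> 0"
proof -
  have ut: "upper_triangular (diagm n c)" by (auto simp: upper_triangular_def diagm_def)
  have "det (diagm n c) = prod_list (diag_mat (diagm n c))" by (rule det_upper_triangular[OF ut diagm_carrier])
  also have "\<dots> \<noteq> 0" using assms by (auto simp: diag_mat_def diagm_def prod_list_zero_iff)
  finally show ?thesis .
qed

lemma transpose_diagm[simp]: "transpose_mat (diagm n c) = diagm n c"
  by (auto intro!: eq_matI simp: diagm_def)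

lemma diagm_comm: "diagm n c * diagm n e = diagm n e * (diagm n c :: 'a::comm_ring_1 mat)"
proof (rule eq_matI)
  fix i j assume "i < dim_row (diagm n e * diagm n c)" "j < dim_col (diagm n e * diagm n c)"
  then have ij: "i < n" "j < n" by auto
  have "(diagm n c * diagm n e) $$ (i,j) = diagm n c $$ (i,j) * e j" by (rule mult_diagm_index) (use ij in auto)
  moreover have "(diagm n e * diagm n c) $$ (i,j) = diagm n e $$ (i,j) * c j" by (rule mult_diagm_index) (use ij in auto)
  ultimately show "(diagm n c * diagm n e) $$ (i,j) = (diagm n e * diagm n c) $$ (i,j)"
    using ij by (simp add: diagm_def mult.commute)
qed auto

lemma diagm_det0:
  assumes "a < n" "c a = (0::'a::field)"
  shows "det (diagm n c) = 0"
proof -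
  have ut: "upper_triangular (diagm n c)" by (auto simp: upper_triangular_def diagm_def)
  have "det (diagm n c) = prod_list (diag_mat (diagm n c))" by (rule det_upper_triangular[OF ut diagm_carrier])
  also have "\<dots> = 0" using assms by (auto simp: diag_mat_def diagm_def prod_list_zero_iff image_iff intro!: bexI[of _ a])
  finally show ?thesis .
qed

lemma img_span:
  assumes B: "(B :: 'a::field mat) \<in> carrier_mat n n" and v: "v \<in> carrier_vec n"
  shows "mat_image B {a \<cdot>\<^sub>v v | a. True} = {a \<cdot>\<^sub>v (B *\<^sub>v v) | a. True}"
  unfolding mat_image_def using mult_mat_vec[OF B v] by (auto simp: image_iff) (metis)

theorem lemma6p3:
  fixes d :: nat and A :: "'a::field mat" and Es :: "nat \<Rightarrow> 'a mat"
    and th ths :: "nat \<Rightarrow> 'a" and r s :: nat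
  assumes d1: "d \<ge> 1"
    and A_carr: "A \<in> carrier_mat (d+1) (d+1)"
    and Es_carr: "\<And>i. i \<le> d \<Longrightarrow> Es i \<in> carrier_mat (d+1) (d+1)"
    and Es_idem: "\<And>i j. i \<le> d \<Longrightarrow> j \<le> d \<Longrightarrow>
                   Es i * Es j = (if i = j then Es i else 0\<^sub>m (d+1) (d+1))"
    and Es_rank: "\<And>i. i \<le> d \<Longrightarrow> vec_space.rank (d+1) (Es i) = 1"
    and tri0: "\<And>i j. i \<le> d \<Longrightarrow> j \<le> d \<Longrightarrow> (i > j + 1 \<or> j > i + 1) \<Longrightarrow>
                   Es i * A * Es j = 0\<^sub>m (d+1) (d+1)"
    and tri1: "\<And>i j. i \<le> d \<Longrightarrow> j \<le> d \<Longrightarrow> (i = j + 1 \<or> j = i + 1) \<Longrightarrow>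
                   Es i * A * Es j \<noteq> 0\<^sub>m (d+1) (d+1)"
    and th_eig: "\<And>i. i \<le> d \<Longrightarrow> eigenvalue A (th i)"
    and th_dist: "\<And>i j. i \<le> d \<Longrightarrow> j \<le> d \<Longrightarrow> i \<noteq> j \<Longrightarrow> th i \<noteq> th j"
    and rs: "r \<le> d" "s \<le> d" "r \<noteq> s"
  shows "let As = mat_sum_upto (d+1) d (\<lambda>i. ths i \<cdot>\<^sub>m Es i);
             E = prim_idem d A th;
             adj = (\<lambda>i j. i \<noteq> j \<and> E i * As * E j \<noteq> 0\<^sub>m (d+1) (d+1));
             cond_i = (adj r s \<and> (\<forall>t\<le>d. adj r t \<longrightarrow> t = s));
             cond_ii = (\<lambda>\<kappa>. mat_image (As - \<kappa> \<cdot>\<^sub>m 1\<^sub>m (d+1)) (range_mat (E r))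
                             = range_mat (E s))
         in (cond_i \<longleftrightarrow> (\<exists>\<kappa>. cond_ii \<kappa>)) \<and>
            (\<forall>\<kappa>. cond_i \<and> cond_ii \<kappa> \<longrightarrow> \<kappa> = mat_trace (E r * As))"
proof -
  define n where "n = Suc d"
  have nd: "d + 1 = n" "Suc d = n" by (simp_all add: n_def)
  have le_iff: "\<And>i. (i \<le> d) = (i < n)" by (auto simp: n_def)
  have n0: "0 < n" by (simp add: n_def)
  have Ac: "A \<in> carrier_mat n n" using A_carr nd by simp
  have Esc: "\<And>i. i < n \<Longrightarrow> Es i \<in> carrier_mat n n" using Es_carr nd le_iff by simp
  have Esi: "\<And>i j. i < n \<Longrightarrow> j < n \<Longrightarrow> Es i * Es j = (if i = j then Es i else 0\<^sub>m n n)"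
    using Es_idem nd le_iff by simp
  have tri: "\<And>i j. i < n \<Longrightarrow> j < n \<Longrightarrow> (i = j + 1 \<or> j = i + 1) \<Longrightarrow> Es i * A * Es j \<noteq> 0\<^sub>m n n"
    using tri1 nd le_iff by simp
  have thd: "\<And>i j. i < n \<Longrightarrow> j < n \<Longrightarrow> i \<noteq> j \<Longrightarrow> th i \<noteq> th j" using th_dist le_iff by simp
  have rn: "r < n" "s < n" using rs le_iff by auto
  note sq = assoc_mult_mat[of _ n n _ n _ n] mult_carrier_mat[of _ n n _ n]

  have "\<forall>k. \<exists>w. k < n \<longrightarrow> eigenvector A w (th k)" using th_eig le_iff unfolding eigenvalue_def by blast
  from choice[OF this] obtain v where "\<forall>k. k < n \<longrightarrow> eigenvector A (v k) (th k)" by blast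
  then have vc: "\<And>k. k < n \<Longrightarrow> v k \<in> carrier_vec n" and vnz: "\<And>k. k < n \<Longrightarrow> v k \<noteq> 0\<^sub>v n"
    and Av: "\<And>k. k < n \<Longrightarrow> A *\<^sub>v v k = th k \<cdot>\<^sub>v v k"
    using Ac unfolding eigenvector_def by auto
  define E where "E = prim_idem d A th"
  have EL: "E i \<in> carrier_mat n n \<and> E i *\<^sub>v v k = (if i = k then v k else 0\<^sub>v n)" if i: "i < n" and k: "k < n" for i k
  proof -
    have dist: "\<And>j. j \<in> set [0..<n] \<Longrightarrow> j \<noteq> i \<Longrightarrow> th j \<noteq> th i" using thd i by auto
    have Eeq: "E i = foldr (\<lambda>j M. if j = i then M else (inverse (th i - th j) \<cdot>\<^sub>m (A - th j \<cdot>\<^sub>m 1\<^sub>m n)) * M) [0..<n] (1\<^sub>m n)"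
      unfolding E_def prim_idem_def nd(2) ..
    have L: "E i \<in> carrier_mat n n \<and> (\<exists>c. E i *\<^sub>v v k = c \<cdot>\<^sub>v v k \<and> (k = i \<longrightarrow> c = 1) \<and> (k \<noteq> i \<and> k \<in> set [0..<n] \<longrightarrow> c = 0))"
      unfolding Eeq by (rule prim_fold_eig[OF Ac vc[OF k] Av[OF k] dist])
    from L obtain c where c: "E i *\<^sub>v v k = c \<cdot>\<^sub>v v k" "k = i \<longrightarrow> c = 1" "k \<noteq> i \<and> k \<in> set [0..<n] \<longrightarrow> c = 0"
      by blast
    have "E i *\<^sub>v v k = (if i = k then v k else 0\<^sub>v n)"
    proof (cases "i = k")
      case True then show ?thesis using c by simp
    next
      case False then have "c = 0" using c k by auto
      then show ?thesis using c False vc[OF k] by (auto intro!: eq_vecI)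
    qed
    then show ?thesis using L by blast
  qed
  have Ec: "\<And>i. i < n \<Longrightarrow> E i \<in> carrier_mat n n" using EL n0 by blast
  have Ev: "\<And>i k. i < n \<Longrightarrow> k < n \<Longrightarrow> E i *\<^sub>v v k = (if i = k then v k else 0\<^sub>v n)" using EL by blast

  define P where "P = mat n n (\<lambda>(a,b). v b $ a)"
  have Pc: "P \<in> carrier_mat n n" and EP: "\<And>i. i < n \<Longrightarrow> E i * P = P * dmat n i" and dP: "det P \<noteq> 0"
    using basis_mat[of n v E, OF vc vnz Ec Ev] unfolding P_def by auto
  obtain Q where Qc: "Q \<in> carrier_mat n n" and PQ: "P * Q = 1\<^sub>m n" and QP: "Q * P = 1\<^sub>m n"
    using inv_exists[OF Pc dP] by blast
  have Edec: "E i = P * dmat n i * Q" if i: "i < n" for i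
  proof -
    have "E i = E i * (P * Q)" using Ec[OF i] PQ by simp
    also have "\<dots> = (E i * P) * Q" by (rule assoc_mult_mat[OF Ec[OF i] Pc Qc, symmetric])
    also have "\<dots> = P * dmat n i * Q" using EP[OF i] by simp
    finally show ?thesis .
  qed

  have Esnz: "Es k \<noteq> 0\<^sub>m n n" if k: "k < n" for k
  proof
    assume z: "Es k = 0\<^sub>m n n"
    obtain j where j: "j < n" "k = j + 1 \<or> j = k + 1"
    proof (cases "k < d")
      case True then show ?thesis using that[of "k+1"] by (auto simp: n_def)
    next
      case False then have "k = d" using k by (auto simp: n_def)
      then show ?thesis using that[of "k-1"] d1 by (auto simp: n_def)
    qed
    have "Es k * A * Es j = 0\<^sub>m n n" using z Ac Esc[OF j(1)] by simp
    then show False using tri[OF k j(1) j(2)] by simp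
  qed
  have "\<forall>k. \<exists>x. k < n \<longrightarrow> x \<in> carrier_vec n \<and> Es k *\<^sub>v x \<noteq> 0\<^sub>v n"
    using nonzero_mat_vec[OF Esc Esnz] by blast
  from choice[OF this] obtain x where "\<forall>k. k < n \<longrightarrow> x k \<in> carrier_vec n \<and> Es k *\<^sub>v x k \<noteq> 0\<^sub>v n"
    by blast
  then have xc: "\<And>k. k < n \<Longrightarrow> x k \<in> carrier_vec n" and xnz: "\<And>k. k < n \<Longrightarrow> Es k *\<^sub>v x k \<noteq> 0\<^sub>v n"
    by auto
  define u where "u k = Es k *\<^sub>v x k" for k
  have uc: "u k \<in> carrier_vec n" if "k < n" for k unfolding u_def using Esc[OF that] xc[OF that] by simp
  have unz: "\<And>k. k < n \<Longrightarrow> u k \<noteq> 0\<^sub>v n" unfolding u_def using xnz by auto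
  have Esu: "Es i *\<^sub>v u k = (if i = k then u k else 0\<^sub>v n)" if i: "i < n" and k: "k < n" for i k
  proof -
    have "Es i *\<^sub>v u k = (Es i * Es k) *\<^sub>v x k"
      unfolding u_def by (rule assoc_mult_mat_vec[OF Esc[OF i] Esc[OF k] xc[OF k], symmetric])
    then show ?thesis using Esi[OF i k] xc[OF k] unfolding u_def by (auto intro!: eq_vecI)
  qed
  define U where "U = mat n n (\<lambda>(a,b). u b $ a)"
  have Uc: "U \<in> carrier_mat n n" and EsU: "\<And>i. i < n \<Longrightarrow> Es i * U = U * dmat n i" and dU: "det U \<noteq> 0"
    using basis_mat[of n u Es, OF uc unz Esc Esu] unfolding U_def by auto
  obtain W where Wc: "W \<in> carrier_mat n n" and UW: "U * W = 1\<^sub>m n" and WU: "W * U = 1\<^sub>m n"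
    using inv_exists[OF Uc dU] by blast
  have Esdec: "Es i = U * dmat n i * W" if i: "i < n" for i
  proof -
    have "Es i = Es i * (U * W)" using Esc[OF i] UW by simp
    also have "\<dots> = (Es i * U) * W" by (rule assoc_mult_mat[OF Esc[OF i] Uc Wc, symmetric])
    also have "\<dots> = U * dmat n i * W" using EsU[OF i] by simp
    finally show ?thesis .
  qed

  define A' where "A' = W * A * U"
  have A'c: "A' \<in> carrier_mat n n" unfolding A'_def using Wc Ac Uc by simp
  have UX: "\<And>X m. X \<in> carrier_mat n m \<Longrightarrow> U * (W * X) = X" by (rule cancel_l[OF UW Uc Wc])
  have WX: "\<And>X m. X \<in> carrier_mat n m \<Longrightarrow> W * (U * X) = X" by (rule cancel_l[OF WU Wc Uc])
  have WAc: "W * A \<in> carrier_mat n n" using Wc Ac by simp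
  have A'W: "A' * W = W * A"
  proof -
    have "A' * W = (W * A) * (U * W)" unfolding A'_def by (rule assoc_mult_mat[OF WAc Uc Wc])
    then show ?thesis using UW WAc Ac Wc by simp
  qed
  have AA': "A = U * A' * W"
  proof -
    have "U * A' * W = U * (A' * W)" by (rule assoc_mult_mat[OF Uc A'c Wc])
    also have "\<dots> = A" unfolding A'W using UX[OF Ac] .
    finally show ?thesis by simp
  qed
  have Esprod: "Es i * A * Es j = U * (dmat n i * A' * dmat n j) * W" if i: "i < n" and j: "j < n" for i j
    unfolding Esdec[OF i] Esdec[OF j] A'_def using Ac Uc Wc by (simp add: sq)
  have A'0: "A' $$ (i,j) = 0 \<longleftrightarrow> Es i * A * Es j = 0\<^sub>m n n" if i: "i < n" and j: "j < n" for i j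
    unfolding Esprod[OF i j] using conj_zero[OF Uc Wc WU, of "dmat n i * A' * dmat n j"] dmat_sandwich_zero[OF A'c i j] A'c by (simp add: sq)

  define As where "As = mat_sum_upto (d+1) d (\<lambda>i. ths i \<cdot>\<^sub>m Es i)"
  have AsU: "As = U * diagm n ths * W"
  proof -
    have fg: "ths i \<cdot>\<^sub>m Es i = U * (ths i \<cdot>\<^sub>m dmat n i) * W" if "i \<in> set [0..<n]" for i
    proof -
      have i: "i < n" using that by simp
      show ?thesis unfolding Esdec[OF i] using Uc Wc by (simp add: mult_smult_distrib[of _ n n _ n] mult_smult_assoc_mat[of _ n n _ n])
    qed
    have "As = U * foldr (\<lambda>i M. ths i \<cdot>\<^sub>m dmat n i + M) [0..<n] (0\<^sub>m n n) * W"
      unfolding As_def mat_sum_upto_def nd using foldr_sum_conj[OF Uc Wc, of "[0..<n]" "\<lambda>i. ths i \<cdot>\<^sub>m Es i" "\<lambda>i. ths i \<cdot>\<^sub>m dmat n i"] fg by auto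
    also have "foldr (\<lambda>i M. ths i \<cdot>\<^sub>m dmat n i + M) [0..<n] (0\<^sub>m n n) = diagm n ths"
      by (subst foldr_sum_diag) (auto simp: diagm_def intro!: eq_matI)
    finally show ?thesis .
  qed
  have Asc: "As \<in> carrier_mat n n" unfolding AsU using Uc Wc by (simp add: sq)
  have tri0': "Es i * A * Es j = 0\<^sub>m n n" if "i < n" "j < n" "i > j + 1 \<or> j > i + 1" for i j
    using tri0[of i j] that le_iff nd by simp
  define dd where "dd = rec_nat (1::'a) (\<lambda>i x. x * A' $$ (i, Suc i) / A' $$ (Suc i, i))"
  have dd0: "dd 0 = 1" and ddS: "\<And>i. dd (Suc i) = dd i * A' $$ (i, Suc i) / A' $$ (Suc i, i)"
    by (simp_all add: dd_def)
  have offnz: "A' $$ (i, Suc i) \<noteq> 0 \<and> A' $$ (Suc i, i) \<noteq> 0" if "Suc i < n" for i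
    using A'0[of i "Suc i"] A'0[of "Suc i" i] tri[of i "Suc i"] tri[of "Suc i" i] that by auto
  have ddnz: "i < n \<Longrightarrow> dd i \<noteq> 0" for i
  proof (induction i)
    case 0 then show ?case by (simp add: dd0)
  next
    case (Suc i) then show ?case using offnz[of i] by (simp add: ddS)
  qed
  have ddsym: "dd a * A' $$ (a,b) = dd b * A' $$ (b,a)" if a: "a < n" and b: "b < n" for a b
  proof -
    consider "a = b" | "b = Suc a" | "a = Suc b" | "a > b + 1 \<or> b > a + 1" by linarith
    then show ?thesis
    proof cases
      case 2 then show ?thesis using offnz[of a] b by (simp add: ddS)
    next
      case 3 then show ?thesis using offnz[of b] a by (simp add: ddS)
    next
      case 4
      then have "A' $$ (a,b) = 0" "A' $$ (b,a) = 0" using A'0 tri0' a b by auto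
      then show ?thesis by simp
    qed simp
  qed
  define Dd where "Dd = diagm n dd"
  define G where "G = transpose_mat W * Dd * W"
  have Ddc: "Dd \<in> carrier_mat n n" unfolding Dd_def by simp
  have Gc: "G \<in> carrier_mat n n" unfolding G_def using Wc Ddc by (simp add: sq)
  have DA': "transpose_mat A' * Dd = Dd * A'"
  proof (rule eq_matI)
    fix a b assume "a < dim_row (Dd * A')" "b < dim_col (Dd * A')"
    then have ab: "a < n" "b < n" using A'c Ddc by auto
    have "(transpose_mat A' * Dd) $$ (a,b) = transpose_mat A' $$ (a,b) * dd b"
      unfolding Dd_def by (rule mult_diagm_index) (use ab A'c in auto)
    moreover have "(Dd * A') $$ (a,b) = dd a * A' $$ (a,b)"
      unfolding Dd_def by (rule diagm_mult_index) (use ab A'c in auto)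
    ultimately show "(transpose_mat A' * Dd) $$ (a,b) = (Dd * A') $$ (a,b)"
      using ab A'c ddsym[OF ab(2) ab(1)] by (simp add: mult.commute)
  qed (use A'c Ddc in auto)
  have DA'X: "transpose_mat A' * (Dd * X) = Dd * (A' * X)" if "X \<in> carrier_mat n m" for X m
  proof -
    have "transpose_mat A' * (Dd * X) = (transpose_mat A' * Dd) * X"
      using A'c Ddc that by (simp add: assoc_mult_mat[of _ n n _ n _ m])
    also have "\<dots> = (Dd * A') * X" unfolding DA' ..
    also have "\<dots> = Dd * (A' * X)" using A'c Ddc that by (simp add: assoc_mult_mat[of _ n n _ n _ m])
    finally show ?thesis .
  qed
  have UtWt: "transpose_mat U * transpose_mat W = 1\<^sub>m n"
    using transpose_mult[OF Wc Uc] WU by simp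
  have UtWtX: "transpose_mat U * (transpose_mat W * X) = X" if "X \<in> carrier_mat n m" for X m
    by (rule cancel_l[OF UtWt _ _ that]) (use Uc Wc in auto)
  have tA: "transpose_mat A = transpose_mat W * (transpose_mat A' * transpose_mat U)"
  proof -
    have "transpose_mat A = transpose_mat (U * (A' * W))" using AA' Uc A'c Wc by (simp add: sq)
    also have "\<dots> = transpose_mat (A' * W) * transpose_mat U" using Uc A'c Wc by (intro transpose_mult) auto
    also have "\<dots> = transpose_mat W * transpose_mat A' * transpose_mat U" using A'c Wc by (simp add: transpose_mult)
    finally show ?thesis using Uc A'c Wc by (simp add: sq)
  qed
  have AG: "transpose_mat A * G = G * A"
  proof -
    have "transpose_mat A * G = transpose_mat W * (Dd * (A' * W))"
      unfolding tA G_def using Uc Wc A'c Ddc by (simp add: sq UtWtX[of _ n] DA'X[of _ n])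
    moreover have "G * A = transpose_mat W * (Dd * (A' * W))"
      unfolding G_def AA' using Uc Wc A'c Ddc by (simp add: sq WX[of _ n])
    ultimately show ?thesis by simp
  qed
  have AGX: "transpose_mat A * (G * X) = G * (A * X)" if "X \<in> carrier_mat n m" for X m
  proof -
    have "transpose_mat A * (G * X) = (transpose_mat A * G) * X"
      using Ac Gc that by (simp add: assoc_mult_mat[of _ n n _ n _ m])
    also have "\<dots> = (G * A) * X" unfolding AG ..
    also have "\<dots> = G * (A * X)" using Ac Gc that by (simp add: assoc_mult_mat[of _ n n _ n _ m])
    finally show ?thesis .
  qed
  have LDX: "diagm n ths * (Dd * X) = Dd * (diagm n ths * X)" if "X \<in> carrier_mat n m" for X m
  proof -
    have "diagm n ths * (Dd * X) = (diagm n ths * Dd) * X"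
      using Ddc that by (simp add: assoc_mult_mat[of _ n n _ n _ m])
    also have "\<dots> = (Dd * diagm n ths) * X" unfolding Dd_def diagm_comm ..
    also have "\<dots> = Dd * (diagm n ths * X)" using Ddc that by (simp add: assoc_mult_mat[of _ n n _ n _ m])
    finally show ?thesis .
  qed
  have tAs: "transpose_mat As = transpose_mat W * (diagm n ths * transpose_mat U)"
  proof -
    have "transpose_mat As = transpose_mat (U * (diagm n ths * W))" using AsU Uc Wc by (simp add: sq)
    also have "\<dots> = transpose_mat (diagm n ths * W) * transpose_mat U" using Uc Wc by (intro transpose_mult) auto
    also have "\<dots> = transpose_mat W * diagm n ths * transpose_mat U" by (simp add: transpose_mult[OF diagm_carrier Wc])
    finally show ?thesis using Uc Wc by (simp add: sq)
  qed
  have AsG: "transpose_mat As * G = G * As"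
  proof -
    have "transpose_mat As * G = transpose_mat W * (diagm n ths * (Dd * W))"
      unfolding tAs G_def using Uc Wc Ddc by (simp add: sq UtWtX[of _ n])
    moreover have "G * As = transpose_mat W * (diagm n ths * (Dd * W))"
      unfolding G_def AsU using Uc Wc Ddc by (simp add: sq WX[of _ n] LDX[of _ n])
    ultimately show ?thesis by simp
  qed
  have AsGX: "transpose_mat As * (G * X) = G * (As * X)" if "X \<in> carrier_mat n m" for X m
  proof -
    have "transpose_mat As * (G * X) = (transpose_mat As * G) * X"
      using Asc Gc that by (simp add: assoc_mult_mat[of _ n n _ n _ m])
    also have "\<dots> = (G * As) * X" unfolding AsG ..
    also have "\<dots> = G * (As * X)" using Asc Gc that by (simp add: assoc_mult_mat[of _ n n _ n _ m])
    finally show ?thesis .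
  qed
  have dW: "det W \<noteq> 0" using det_mult[OF Wc Uc] WU by auto
  have dG: "det G \<noteq> 0"
  proof -
    have "det G = det (transpose_mat W) * det Dd * det W" unfolding G_def using Wc Ddc
      by (simp add: det_mult[of _ n] sq)
    also have "\<dots> = det W * det Dd * det W" using det_transpose[OF Wc] by simp
    finally show ?thesis using dW diagm_det[of n dd] ddnz unfolding Dd_def by auto
  qed
  define Th where "Th = diagm n th"
  have Thc: "Th \<in> carrier_mat n n" unfolding Th_def by simp
  have colP: "col P b = v b" if "b < n" for b
    unfolding P_def using vc[OF that] that by (intro eq_vecI) auto
  have AP: "A * P = P * Th"
  proof (rule eq_matI)
    fix a b assume "a < dim_row (P * Th)" "b < dim_col (P * Th)"
    then have ab: "a < n" "b < n" using Pc Thc by auto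
    have "(A * P) $$ (a,b) = (A *\<^sub>v col P b) $ a" using Ac Pc ab by simp
    also have "\<dots> = th b * v b $ a" unfolding colP[OF ab(2)] Av[OF ab(2)] using vc[OF ab(2)] ab by simp
    also have "\<dots> = (P * Th) $$ (a,b)" unfolding Th_def
      using mult_diagm_index[OF Pc ab, of th] ab by (simp add: P_def mult.commute)
    finally show "(A * P) $$ (a,b) = (P * Th) $$ (a,b)" .
  qed (use Ac Pc Thc in auto)
  have PtAt: "transpose_mat P * (transpose_mat A * X) = Th * (transpose_mat P * X)" if "X \<in> carrier_mat n m" for X m
  proof -
    have "transpose_mat P * transpose_mat A = transpose_mat (A * P)" using transpose_mult[OF Ac Pc] by simp
    also have "\<dots> = transpose_mat (P * Th)" unfolding AP ..
    also have "\<dots> = Th * transpose_mat P" using transpose_mult[OF Pc Thc] unfolding Th_def by simp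
    finally have e: "transpose_mat P * transpose_mat A = Th * transpose_mat P" .
    have "transpose_mat P * (transpose_mat A * X) = (transpose_mat P * transpose_mat A) * X"
      using Pc Ac that by (simp add: assoc_mult_mat[of _ n n _ n _ m])
    also have "\<dots> = (Th * transpose_mat P) * X" unfolding e ..
    also have "\<dots> = Th * (transpose_mat P * X)" using Pc Thc that by (simp add: assoc_mult_mat[of _ n n _ n _ m])
    finally show ?thesis .
  qed
  define M where "M = transpose_mat P * G * P"
  have Mc: "M \<in> carrier_mat n n" unfolding M_def using Pc Gc by (simp add: sq)
  have ThM: "Th * M = M * Th"
  proof -
    have "M * Th = transpose_mat P * (G * (A * P))" unfolding M_def AP using Pc Gc Thc by (simp add: sq)
    also have "\<dots> = transpose_mat P * (transpose_mat A * (G * P))" using AGX[of P n] Pc by simp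
    also have "\<dots> = Th * (transpose_mat P * (G * P))" using PtAt[of "G * P" n] Pc Gc by (simp add: sq)
    also have "\<dots> = Th * M" unfolding M_def using Pc Gc by (simp add: sq)
    finally show ?thesis by simp
  qed
  define m where "m a = M $$ (a,a)" for a
  have Moff: "M $$ (a,b) = 0" if ab: "a < n" "b < n" "a \<noteq> b" for a b
  proof -
    have "(Th * M) $$ (a,b) = th a * M $$ (a,b)" unfolding Th_def by (rule diagm_mult_index[OF Mc ab(1,2)])
    moreover have "(M * Th) $$ (a,b) = M $$ (a,b) * th b" unfolding Th_def by (rule mult_diagm_index[OF Mc ab(1,2)])
    ultimately have "th a * M $$ (a,b) = th b * M $$ (a,b)" using ThM by (metis mult.commute)
    then have "(th a - th b) * M $$ (a,b) = 0" by (simp add: algebra_simps)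
    then show ?thesis using thd[OF ab] by simp
  qed
  have Mdiag: "M = diagm n m"
    by (rule eq_matI) (use Mc Moff in \<open>auto simp: diagm_def m_def\<close>)
  have dM: "det M \<noteq> 0"
  proof -
    have "det M = det (transpose_mat P) * det G * det P" unfolding M_def using Pc Gc
      by (simp add: det_mult[of _ n] sq)
    then show ?thesis using det_transpose[OF Pc] dP dG by simp
  qed
  have mnz: "m a \<noteq> 0" if "a < n" for a
    using diagm_det0[OF that, of m] dM Mdiag by auto
  define B where "B = Q * As * P"
  have Bc: "B \<in> carrier_mat n n" unfolding B_def using Qc Asc Pc by (simp add: sq)
  have PX: "P * (Q * X) = X" if "X \<in> carrier_mat n m" for X m by (rule cancel_l[OF PQ Pc Qc that])
  have QtPt: "transpose_mat Q * transpose_mat P = 1\<^sub>m n"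
    using transpose_mult[OF Pc Qc] PQ by simp
  have QtPtX: "transpose_mat Q * (transpose_mat P * X) = X" if "X \<in> carrier_mat n m" for X m
    by (rule cancel_l[OF QtPt _ _ that]) (use Pc Qc in auto)
  have tB: "transpose_mat B = transpose_mat P * (transpose_mat As * transpose_mat Q)"
  proof -
    have "transpose_mat B = transpose_mat (Q * (As * P))" unfolding B_def using Qc Asc Pc by (simp add: sq)
    also have "\<dots> = transpose_mat (As * P) * transpose_mat Q" using Qc Asc Pc by (intro transpose_mult) auto
    also have "\<dots> = transpose_mat P * transpose_mat As * transpose_mat Q" using transpose_mult[OF Asc Pc] by simp
    finally show ?thesis using Qc Asc Pc by (simp add: sq)
  qed
  have MB: "M * B = transpose_mat B * M"
  proof -
    have "M * B = transpose_mat P * (G * (As * P))" unfolding M_def B_def using Pc Gc Qc Asc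
      by (simp add: sq PX[of _ n])
    moreover have "transpose_mat B * M = transpose_mat P * (G * (As * P))" unfolding tB M_def using Pc Gc Qc Asc
      by (simp add: sq QtPtX[of _ n] AsGX[of _ n])
    ultimately show ?thesis by simp
  qed
  have Bsym: "m a * B $$ (a,b) = B $$ (b,a) * m b" if ab: "a < n" "b < n" for a b
  proof -
    have "(M * B) $$ (a,b) = m a * B $$ (a,b)" unfolding Mdiag by (rule diagm_mult_index[OF Bc ab])
    moreover have "(transpose_mat B * M) $$ (a,b) = transpose_mat B $$ (a,b) * m b"
      unfolding Mdiag by (rule mult_diagm_index) (use Bc ab in auto)
    ultimately show ?thesis using MB Bc ab by simp
  qed
  have Bnz: "B $$ (a,b) \<noteq> 0 \<longleftrightarrow> B $$ (b,a) \<noteq> 0" if ab: "a < n" "b < n" for a b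
    using Bsym[OF ab] mnz[OF ab(1)] mnz[OF ab(2)] by auto
  have adjB: "E i * As * E j = 0\<^sub>m n n \<longleftrightarrow> B $$ (i,j) = 0" if ij: "i < n" "j < n" for i j
  proof -
    have "E i * As * E j = P * (dmat n i * B * dmat n j) * Q"
      unfolding Edec[OF ij(1)] Edec[OF ij(2)] B_def using Pc Qc Asc by (simp add: sq)
    then show ?thesis using conj_zero[OF Pc Qc QP, of "dmat n i * B * dmat n j"] dmat_sandwich_zero[OF Bc ij] Bc
      by (simp add: sq)
  qed
  have trB: "mat_trace (E r * As) = B $$ (r,r)"
  proof -
    have "E r * As = P * (dmat n r * Q * As)" unfolding Edec[OF rn(1)] using Pc Qc Asc by (simp add: sq)
    then have "mat_trace (E r * As) = mat_trace ((dmat n r * Q * As) * P)"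
      using mat_trace_comm[OF Pc, of "dmat n r * Q * As"] Qc Asc by (simp add: sq)
    also have "(dmat n r * Q * As) * P = dmat n r * B" unfolding B_def using Pc Qc Asc by (simp add: sq)
    also have "mat_trace (dmat n r * B) = B $$ (r,r)" by (rule mat_trace_dmat[OF Bc rn(1)])
    finally show ?thesis .
  qed
  have rng: "range_mat (E i) = {a \<cdot>\<^sub>v v i | a. True}" if i: "i < n" for i
  proof -
    have Eix: "E i *\<^sub>v y = (row Q i \<bullet> y) \<cdot>\<^sub>v v i" if y: "y \<in> carrier_vec n" for y
    proof (rule eq_vecI)
      fix a assume "a < dim_vec ((row Q i \<bullet> y) \<cdot>\<^sub>v v i)"
      then have a: "a < n" using vc[OF i] by simp
      have "(E i *\<^sub>v y) $ a = (\<Sum>b<n. E i $$ (a,b) * y $ b)"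
        using Ec[OF i] a y by (simp add: scalar_prod_def lessThan_atLeast0)
      also have "\<dots> = (\<Sum>b<n. P $$ (a,i) * (Q $$ (i,b) * y $ b))"
        using dmat_conj_index[OF Pc Qc i a] unfolding Edec[OF i] by (simp add: mult.assoc)
      also have "\<dots> = P $$ (a,i) * (row Q i \<bullet> y)"
        using Qc y i by (simp add: sum_distrib_left scalar_prod_def lessThan_atLeast0)
      also have "\<dots> = ((row Q i \<bullet> y) \<cdot>\<^sub>v v i) $ a" using a i vc[OF i] by (simp add: P_def mult.commute)
      finally show "(E i *\<^sub>v y) $ a = ((row Q i \<bullet> y) \<cdot>\<^sub>v v i) $ a" .
    qed (use Ec[OF i] vc[OF i] in auto)
    have dc: "dim_col (E i) = n" using Ec[OF i] by simp
    show ?thesis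
    proof (intro equalityI subsetI)
      fix z assume "z \<in> range_mat (E i)"
      then obtain y where y: "y \<in> carrier_vec n" "z = E i *\<^sub>v y" unfolding range_mat_def dc by auto
      then show "z \<in> {a \<cdot>\<^sub>v v i | a. True}" using Eix by auto
    next
      fix z assume "z \<in> {a \<cdot>\<^sub>v v i | a. True}"
      then obtain a where z: "z = a \<cdot>\<^sub>v v i" by auto
      have "E i *\<^sub>v z = z" unfolding z using mult_mat_vec[OF Ec[OF i] vc[OF i]] Ev[OF i i] by simp
      moreover have "z \<in> carrier_vec n" unfolding z using vc[OF i] by simp
      ultimately show "z \<in> range_mat (E i)" unfolding range_mat_def dc by (metis image_eqI)
    qed
  qed
  have AsP: "As * P = P * B" unfolding B_def using Pc Qc Asc by (simp add: sq PX[of _ n])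
  have coordII: "mat_image (As - \<kappa> \<cdot>\<^sub>m 1\<^sub>m n) (range_mat (E r)) = range_mat (E s) \<longleftrightarrow>
      (\<exists>\<mu>. \<mu> \<noteq> 0 \<and> (\<forall>t<n. B $$ (t,r) - (if t = r then \<kappa> else 0) = (if t = s then \<mu> else 0)))" for \<kappa>
  proof -
    define K where "K = As - \<kappa> \<cdot>\<^sub>m 1\<^sub>m n"
    define y where "y = col (B - \<kappa> \<cdot>\<^sub>m 1\<^sub>m n) r"
    have BKc: "B - \<kappa> \<cdot>\<^sub>m 1\<^sub>m n \<in> carrier_mat n n" by (rule minus_carrier_mat) (use Bc in auto)
    have Kc: "K \<in> carrier_mat n n" unfolding K_def by (rule minus_carrier_mat) (use Asc in auto)
    have yc: "y \<in> carrier_vec n" unfolding y_def using Bc by (auto simp: col_def)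
    have KP: "K * P = P * (B - \<kappa> \<cdot>\<^sub>m 1\<^sub>m n)"
    proof -
      have 1: "K * P = As * P - (\<kappa> \<cdot>\<^sub>m 1\<^sub>m n) * P" unfolding K_def
        by (rule minus_mult_distrib_mat[of _ n n]) (use Asc Pc in auto)
      have 2: "(\<kappa> \<cdot>\<^sub>m 1\<^sub>m n) * P = \<kappa> \<cdot>\<^sub>m P" using Pc by (simp add: mult_smult_assoc_mat[of _ n n _ n])
      have 3: "P * (B - \<kappa> \<cdot>\<^sub>m 1\<^sub>m n) = P * B - P * (\<kappa> \<cdot>\<^sub>m 1\<^sub>m n)"
        by (rule mult_minus_distrib_mat[of _ n n]) (use Bc Pc in auto)
      have 4: "P * (\<kappa> \<cdot>\<^sub>m 1\<^sub>m n) = \<kappa> \<cdot>\<^sub>m P" using Pc by (simp add: mult_smult_distrib[of _ n n _ n])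
      show ?thesis unfolding 1 2 3 4 AsP ..
    qed
    have Kv: "K *\<^sub>v v r = P *\<^sub>v y"
    proof -
      have "K *\<^sub>v v r = K *\<^sub>v col P r" using colP[OF rn(1)] by simp
      also have "\<dots> = col (K * P) r" by (rule col_mult2[OF Kc Pc rn(1), symmetric])
      also have "\<dots> = col (P * (B - \<kappa> \<cdot>\<^sub>m 1\<^sub>m n)) r" unfolding KP ..
      also have "\<dots> = P *\<^sub>v y" unfolding y_def by (rule col_mult2[OF Pc BKc rn(1)])
      finally show ?thesis .
    qed
    have vs: "v s = P *\<^sub>v unit_vec n s" by (intro eq_vecI) (use vc[OF rn(2)] rn(2) in \<open>auto simp: P_def\<close>)
    have QPv: "Q *\<^sub>v (P *\<^sub>v z) = z" if "z \<in> carrier_vec n" for z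
      using assoc_mult_mat_vec[OF Qc Pc that] QP that by simp
    have "mat_image K (range_mat (E r)) = {a \<cdot>\<^sub>v (K *\<^sub>v v r) | a. True}"
      unfolding rng[OF rn(1)] by (rule img_span[OF Kc vc[OF rn(1)]])
    then have "mat_image K (range_mat (E r)) = range_mat (E s) \<longleftrightarrow> (\<exists>\<mu>. \<mu> \<noteq> 0 \<and> K *\<^sub>v v r = \<mu> \<cdot>\<^sub>v v s)"
      unfolding rng[OF rn(2)] using span_eq[OF vc[OF rn(2)] _ vnz[OF rn(2)], of "K *\<^sub>v v r"] Kc vc[OF rn(1)] by simp
    also have "\<dots> \<longleftrightarrow> (\<exists>\<mu>. \<mu> \<noteq> 0 \<and> y = \<mu> \<cdot>\<^sub>v unit_vec n s)"
    proof -
      have "K *\<^sub>v v r = \<mu> \<cdot>\<^sub>v v s \<longleftrightarrow> y = \<mu> \<cdot>\<^sub>v unit_vec n s" for \<mu>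
      proof
        assume "K *\<^sub>v v r = \<mu> \<cdot>\<^sub>v v s"
        then have "P *\<^sub>v y = P *\<^sub>v (\<mu> \<cdot>\<^sub>v unit_vec n s)" unfolding Kv vs using mult_mat_vec[OF Pc] by simp
        then have "Q *\<^sub>v (P *\<^sub>v y) = Q *\<^sub>v (P *\<^sub>v (\<mu> \<cdot>\<^sub>v unit_vec n s))" by simp
        then show "y = \<mu> \<cdot>\<^sub>v unit_vec n s" using QPv yc by simp
      next
        assume "y = \<mu> \<cdot>\<^sub>v unit_vec n s"
        then show "K *\<^sub>v v r = \<mu> \<cdot>\<^sub>v v s" unfolding Kv vs using mult_mat_vec[OF Pc] by simp
      qed
      then show ?thesis by simp
    qed
    also have "\<dots> \<longleftrightarrow> (\<exists>\<mu>. \<mu> \<noteq> 0 \<and> (\<forall>t<n. B $$ (t,r) - (if t = r then \<kappa> else 0) = (if t = s then \<mu> else 0)))"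
    proof -
      have yt: "y $ t = B $$ (t,r) - (if t = r then \<kappa> else 0)" if "t < n" for t
        unfolding y_def using Bc rn that by auto
      have "y = \<mu> \<cdot>\<^sub>v unit_vec n s \<longleftrightarrow> (\<forall>t<n. B $$ (t,r) - (if t = r then \<kappa> else 0) = (if t = s then \<mu> else 0))" for \<mu>
      proof
        assume yeq: "y = \<mu> \<cdot>\<^sub>v unit_vec n s"
        show "\<forall>t<n. B $$ (t,r) - (if t = r then \<kappa> else 0) = (if t = s then \<mu> else 0)"
        proof (intro allI impI)
          fix t assume t: "t < n"
          have "y $ t = (\<mu> \<cdot>\<^sub>v unit_vec n s) $ t" using yeq by simp
          then show "B $$ (t,r) - (if t = r then \<kappa> else 0) = (if t = s then \<mu> else 0)" using yt[OF t] t rn by (simp add: unit_vec_def)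
        qed
      next
        assume H: "\<forall>t<n. B $$ (t,r) - (if t = r then \<kappa> else 0) = (if t = s then \<mu> else 0)"
        show "y = \<mu> \<cdot>\<^sub>v unit_vec n s"
          by (intro eq_vecI) (use yc H yt in \<open>auto simp: unit_vec_def\<close>)
      qed
      then show ?thesis by simp
    qed
    finally show ?thesis unfolding K_def .
  qed
  have II: "(mat_image (As - \<kappa> \<cdot>\<^sub>m 1\<^sub>m n) (range_mat (E r)) = range_mat (E s)) \<longleftrightarrow>
      (B $$ (s,r) \<noteq> 0 \<and> \<kappa> = B $$ (r,r) \<and> (\<forall>t<n. t \<noteq> r \<and> t \<noteq> s \<longrightarrow> B $$ (t,r) = 0))" for \<kappa>
    unfolding coordII
  proof
    assume "\<exists>\<mu>. \<mu> \<noteq> 0 \<and> (\<forall>t<n. B $$ (t,r) - (if t = r then \<kappa> else 0) = (if t = s then \<mu> else 0))"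
    then obtain \<mu> where mu: "\<mu> \<noteq> 0" "\<And>t. t < n \<Longrightarrow> B $$ (t,r) - (if t = r then \<kappa> else 0) = (if t = s then \<mu> else 0)"
      by blast
    have "B $$ (s,r) = \<mu>" using mu(2)[OF rn(2)] rs(3) by simp
    moreover have "\<kappa> = B $$ (r,r)" using mu(2)[OF rn(1)] rs(3) by simp
    moreover have "\<forall>t<n. t \<noteq> r \<and> t \<noteq> s \<longrightarrow> B $$ (t,r) = 0" 
    proof (intro allI impI)
      fix t assume t: "t < n" "t \<noteq> r \<and> t \<noteq> s"
      then show "B $$ (t,r) = 0" using mu(2)[OF t(1)] by simp
    qed
    ultimately show "B $$ (s,r) \<noteq> 0 \<and> \<kappa> = B $$ (r,r) \<and> (\<forall>t<n. t \<noteq> r \<and> t \<noteq> s \<longrightarrow> B $$ (t,r) = 0)"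
      using mu(1) by simp
  next
    assume H: "B $$ (s,r) \<noteq> 0 \<and> \<kappa> = B $$ (r,r) \<and> (\<forall>t<n. t \<noteq> r \<and> t \<noteq> s \<longrightarrow> B $$ (t,r) = 0)"
    show "\<exists>\<mu>. \<mu> \<noteq> 0 \<and> (\<forall>t<n. B $$ (t,r) - (if t = r then \<kappa> else 0) = (if t = s then \<mu> else 0))"
      using H rs(3) by (intro exI[of _ "B $$ (s,r)"]) auto
  qed
  have adjR: "(r \<noteq> t \<and> E r * As * E t \<noteq> 0\<^sub>m n n) \<longleftrightarrow> (t \<noteq> r \<and> B $$ (t,r) \<noteq> 0)" if "t < n" for t
    using adjB[OF rn(1) that] Bnz[OF rn(1) that] by auto
  have ci: "((r \<noteq> s \<and> E r * As * E s \<noteq> 0\<^sub>m n n) \<and> (\<forall>t\<le>d. r \<noteq> t \<and> E r * As * E t \<noteq> 0\<^sub>m n n \<longrightarrow> t = s))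
      \<longleftrightarrow> (B $$ (s,r) \<noteq> 0 \<and> (\<forall>t<n. t \<noteq> r \<and> t \<noteq> s \<longrightarrow> B $$ (t,r) = 0))"
    using adjR rn rs(3) le_iff by auto
  show ?thesis
    unfolding Let_def E_def[symmetric] As_def[symmetric] unfolding nd(1)
    unfolding ci II trB by auto
qed

end
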